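(* In the network model described in the context, let $\pi$ be an admissible cyclic policy with period $K^\pi$, and let $\bar{\mu}_e^{\pi}=\frac{1}{K^{\pi}}\sum_{t=0}^{K^{\pi}-1}\mu_e^{\pi}(t)$ denote the time-average activation rate of link $e$. Then all queues are stable under $\pi$ if and only if \[ \bar{\mu}_e^{\pi}\ge \frac{\lambda_i}{w_{i,e}}\quad\text{for all } f_i\in\mathcal{F},\ e\in\mathcal{T}^{(i)}. \]
   Context: Network model: a directed graph $G=(V,E)$; time is slotted. Each link $e$ has capacity $c_e$. Interference is described by a conflict graph on the links; $\mathcal{M}$ is the set of feasible activation sets (independent sets of the conflict graph). Flow $f_i\in\mathcal{F}$ has a fixed route $\mathcal{T}^{(i)}$ (sequence of links), deterministic fluid arrival rate $\lambda_i>0$ per slot at its source. Each link $e\in\mathcal{T}^{(i)}$ reserves a slice of width $w_{i,e}>0$ for $f_i$ with its own FCFS queue of size $Q_{i,e}(t)$ at the beginning of slot $t$ (initially empty). A policy $\pi$ chooses $\mu^\pi(t)\in\mathcal{M}$ in each slot; $\mu^\pi_e(t)=1$ if $e$ is activated. Admissible policies respect interference and are work-conserving: an activated link serves $\min\{Q_{i,e}(t),w_{i,e}\}$ from each of its slice queues; served units move to the next link's queue in the next slot (or are delivered at the last link). A policy is cyclic with period $K^\pi$ if $\mu^\pi(t)=\mu^\pi(t+K^\pi)$ for all $t\ge0$. A queue is stable if it remains bounded as the horizon $T\to\infty$ (arrivals continuing through slot $T$). *)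

theory Defs
  imports Main Complex_Main
begin

definition is_route :: "('v \<times> 'v) set \<Rightarrow> ('v \<times> 'v) list \<Rightarrow> bool" where
  "is_route E r \<longleftrightarrow> r \<noteq> [] \<and> set r \<subseteq> E \<and> distinct r \<and>
     (\<forall>k. Suc k < length r \<longrightarrow> snd (r ! k) = fst (r ! Suc k))"

definition feasible_sets :: "('v \<times> 'v) set \<Rightarrow> (('v \<times> 'v) \<Rightarrow> ('v \<times> 'v) \<Rightarrow> bool) \<Rightarrow> ('v \<times> 'v) set set" where
  "feasible_sets E conflict = {S. S \<subseteq> E \<and> (\<forall>e\<in>S. \<forall>e'\<in>S. e \<noteq> e' \<longrightarrow> \<not> conflict e e')}"

definition serve :: "(nat \<Rightarrow> 'e set) \<Rightarrow> 'e list \<Rightarrow> ('e \<Rightarrow> real) \<Rightarrow> (nat \<Rightarrow> real) \<Rightarrow> nat \<Rightarrow> nat \<Rightarrow> real" where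
  "serve mu r w q t k = (if r ! k \<in> mu t then min (q k) (w (r ! k)) else 0)"

(* qlen mu r w lam t k = queue size Q_{i,e}(t) of the flow with route r at its k-th link e = r!k,
   at the beginning of slot t; initially empty; fluid arrivals lam per slot at the source;
   served units join the next hop's queue in the next slot; served units at the last hop leave. *)
primrec qlen :: "(nat \<Rightarrow> 'e set) \<Rightarrow> 'e list \<Rightarrow> ('e \<Rightarrow> real) \<Rightarrow> real \<Rightarrow> nat \<Rightarrow> nat \<Rightarrow> real" where
  "qlen mu r w lam 0 = (\<lambda>k. 0)"
| "qlen mu r w lam (Suc t) = (\<lambda>k. qlen mu r w lam t k - serve mu r w (qlen mu r w lam t) t k
      + (if k = 0 then lam else serve mu r w (qlen mu r w lam t) t (k - 1)))"

definition avg_rate :: "(nat \<Rightarrow> 'e set) \<Rightarrow> nat \<Rightarrow> 'e \<Rightarrow> real" where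
  "avg_rate mu K e = (\<Sum>t<K. if e \<in> mu t then 1 else 0) / real K"

definition all_stable :: "'f set \<Rightarrow> ('f \<Rightarrow> 'e list) \<Rightarrow> ('f \<Rightarrow> real) \<Rightarrow> ('f \<Rightarrow> 'e \<Rightarrow> real) \<Rightarrow> (nat \<Rightarrow> 'e set) \<Rightarrow> bool" where
  "all_stable F route lam w mu \<longleftrightarrow>
     (\<forall>i\<in>F. \<forall>k<length (route i). \<exists>B. \<forall>t. qlen mu (route i) (w i) (lam i) t k \<le> B)"

end

theory Submission
  imports Defs
begin


lemma per_shift:
  fixes f :: "nat \<Rightarrow> real"
  assumes "\<forall>t. f (t+K) = f t"
  shows "(\<Sum>u<K. f (s+u)) = (\<Sum>u<K. f u)"
proof (induction s)
  case 0 then show ?case by simp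
next
  case (Suc s)
  have "(\<Sum>u<Suc K. f (s+u)) = f s + (\<Sum>u<K. f (s + Suc u))"
    by (subst sum.lessThan_Suc_shift) simp
  moreover have "(\<Sum>u<Suc K. f (s+u)) = (\<Sum>u<K. f (s+u)) + f (s+K)" by simp
  moreover have "f (s+K) = f s" using assms by simp
  ultimately show ?case using Suc by simp
qed

lemma sum_split_add:
  fixes f :: "nat \<Rightarrow> real"
  shows "(\<Sum>u<a+b. f u) = (\<Sum>u<a. f u) + (\<Sum>u<b. f (a+u))"
  by (induction b) auto

lemma per_mult:
  fixes f :: "nat \<Rightarrow> real"
  assumes "\<forall>t. f (t+K) = f t"
  shows "(\<Sum>u<m*K. f (s+u)) = real m * (\<Sum>u<K. f u)"
proof (induction m)
  case 0 then show ?case by simp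
next
  case (Suc m)
  have "(\<Sum>u<Suc m*K. f (s+u)) = (\<Sum>u<m*K. f (s+u)) + (\<Sum>u<K. f (s + m*K + u))"
    using sum_split_add[of "\<lambda>u. f (s+u)" "m*K" K] by (simp add: ac_simps)
  also have "(\<Sum>u<K. f (s + m*K + u)) = (\<Sum>u<K. f u)" by (rule per_shift[OF assms])
  finally show ?case using Suc by (simp add: algebra_simps)
qed

lemma window_lb:
  fixes f :: "nat \<Rightarrow> real"
  assumes "\<forall>t. f (t+K) = f t" and "\<forall>t. f t \<ge> 0"
  shows "(\<Sum>u<L. f (s+u)) \<ge> real (L div K) * (\<Sum>u<K. f u)"
proof -
  have "(\<Sum>u<L div K * K. f (s+u)) \<le> (\<Sum>u<L. f (s+u))"
    by (rule sum_mono2) (auto simp: assms(2) intro: order.strict_trans1[OF div_times_less_eq_dividend])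
  then show ?thesis using per_mult[OF assms(1), where m="L div K" and s=s] by simp
qed

lemma lindley:
  fixes Q a :: "nat \<Rightarrow> real" and b :: "nat \<Rightarrow> bool"
  assumes rec: "\<forall>t. Q (Suc t) = Q t - (if b t then min (Q t) W else 0) + a t"
    and Q0: "Q 0 = 0" and W: "W \<ge> 0"
  shows "\<exists>s L. s + L = t \<and> Q t \<le> (\<Sum>u<L. a (s+u)) - (\<Sum>u<L. (if b (s+u) then W else 0)) + W"
proof (induction t)
  case 0 show ?case using Q0 W by (intro exI[of _ 0]) auto
next
  case (Suc t)
  then obtain s L where sL: "s + L = t"
    "Q t \<le> (\<Sum>u<L. a (s+u)) - (\<Sum>u<L. (if b (s+u) then W else 0)) + W" by blast
  show ?case
  proof (cases "b t \<and> Q t < W")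
    case True
    then have "Q (Suc t) = a t" using rec by simp
    then show ?thesis using True W by (intro exI[of _ t] exI[of _ 1]) auto
  next
    case False
    have "Q (Suc t) = Q t - (if b t then W else 0) + a t" using rec False by auto
    then show ?thesis using sL by (intro exI[of _ s] exI[of _ "Suc L"]) auto
  qed
qed

lemma hop_bound:
  fixes Q a :: "nat \<Rightarrow> real" and b :: "nat \<Rightarrow> bool"
  assumes rec: "\<forall>t. Q (Suc t) = Q t - (if b t then min (Q t) W else 0) + a t"
    and Q0: "Q 0 = 0" and W: "W \<ge> 0" and l: "l \<ge> 0" and K: "K > 0"
    and per: "\<forall>t. b (t+K) = b t"
    and arr: "\<forall>s L. (\<Sum>u<L. a (s+u)) \<le> l * real L + M"
    and cap: "real K * l \<le> W * (\<Sum>u<K. if b u then 1 else 0)"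
  shows "\<exists>B. \<forall>t. Q t \<le> B"
proof (intro exI allI)
  fix t
  obtain s L where sL: "Q t \<le> (\<Sum>u<L. a (s+u)) - (\<Sum>u<L. (if b (s+u) then W else 0)) + W"
    using lindley[OF rec Q0 W, of t] by blast
  define f where "f u = (if b u then W else 0)" for u
  have fper: "\<forall>t. f (t+K) = f t" using per by (simp add: f_def)
  have fnn: "\<forall>t. f t \<ge> 0" using W by (simp add: f_def)
  have sumf: "(\<Sum>u<K. f u) = W * (\<Sum>u<K. if b u then 1 else 0)"
    by (simp add: f_def sum_distrib_left if_distrib cong: if_cong)
  have wl: "(\<Sum>u<L. f (s+u)) \<ge> real (L div K) * (\<Sum>u<K. f u)"
    by (rule window_lb[OF fper fnn])
  have dk: "real (L div K) * real K \<ge> real L - real K"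
  proof -
    have "L \<le> L div K * K + K" using K
      by (metis add_le_cancel_left div_mult_mod_eq less_imp_le mod_less_divisor)
    then have "real L \<le> real (L div K * K) + real K" by linarith
    then show ?thesis by simp
  qed
  have "real (L div K) * (\<Sum>u<K. f u) \<ge> real (L div K) * (real K * l)"
    using sumf cap by (simp add: mult_left_mono)
  moreover have "real (L div K) * (real K * l) \<ge> (real L - real K) * l"
    using dk l by (metis mult.assoc mult_right_mono)
  ultimately have "(\<Sum>u<L. f (s+u)) \<ge> (real L - real K) * l" using wl by linarith
  moreover have "(\<Sum>u<L. a (s+u)) \<le> l * real L + M" using arr by blast
  ultimately show "Q t \<le> M + real K * l + W" using sL unfolding f_def
    by (simp add: algebra_simps)
qed

abbreviation arrv :: "(nat \<Rightarrow> 'e set) \<Rightarrow> 'e list \<Rightarrow> ('e \<Rightarrow> real) \<Rightarrow> real \<Rightarrow> nat \<Rightarrow> nat \<Rightarrow> real" where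
  "arrv mu r w lam t k \<equiv> (if k = 0 then lam else serve mu r w (qlen mu r w lam t) t (k - 1))"

lemma qlen_nonneg:
  assumes "lam \<ge> 0" "\<forall>e\<in>set r. w e > 0"
  shows "k < length r \<Longrightarrow> qlen mu r w lam t k \<ge> 0"
proof (induction t arbitrary: k)
  case 0 then show ?case by simp
next
  case (Suc t)
  have a: "qlen mu r w lam t k - serve mu r w (qlen mu r w lam t) t k \<ge> 0"
    using Suc.IH[OF Suc.prems] by (simp add: serve_def)
  have b: "arrv mu r w lam t k \<ge> 0"
  proof (cases "k = 0")
    case True then show ?thesis using assms by simp
  next
    case False
    then have "k - 1 < length r" using Suc.prems by simp
    then have "qlen mu r w lam t (k-1) \<ge> 0" "w (r ! (k-1)) > 0"
      using Suc.IH assms(2) by auto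
    then show ?thesis using False by (simp add: serve_def)
  qed
  show ?case using a b by simp
qed

lemma qlen_conserve:
  "qlen mu r w lam (s+L) k = qlen mu r w lam s k + (\<Sum>u<L. arrv mu r w lam (s+u) k)
     - (\<Sum>u<L. serve mu r w (qlen mu r w lam (s+u)) (s+u) k)"
  by (induction L) auto

lemma arr_sum_telescope:
  "(\<Sum>j<Suc k. arrv mu r w lam t j - serve mu r w (qlen mu r w lam t) t j)
     = lam - serve mu r w (qlen mu r w lam t) t k"
  by (induction k) auto

lemma qlen_sum:
  "(\<Sum>j<Suc k. qlen mu r w lam t j) = lam * real t - (\<Sum>u<t. serve mu r w (qlen mu r w lam u) u k)"
proof (induction t)
  case 0 then show ?case by simp
next
  case (Suc t)
  have "(\<Sum>j<Suc k. qlen mu r w lam (Suc t) j) = (\<Sum>j<Suc k. qlen mu r w lam t j)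
     + (\<Sum>j<Suc k. arrv mu r w lam t j - serve mu r w (qlen mu r w lam t) t j)"
    by (simp add: sum.distrib[symmetric] algebra_simps del: sum.lessThan_Suc)
  then show ?case using Suc arr_sum_telescope[where mu=mu and r=r and w=w and lam=lam and t=t and k=k] by (simp add: algebra_simps)
qed

lemma flow_stable:
  assumes l: "lam \<ge> 0" and wpos: "\<forall>e\<in>set r. w e > 0" and K: "K > 0"
    and per: "\<forall>t. mu (t + K) = mu t"
    and cap: "\<forall>k<length r. real K * lam \<le> w (r!k) * (\<Sum>u<K. if r!k \<in> mu u then 1 else 0)"
  shows "k < length r \<Longrightarrow> \<exists>M B. (\<forall>s L. (\<Sum>u<L. arrv mu r w lam (s+u) k) \<le> lam * real L + M)
            \<and> (\<forall>t. qlen mu r w lam t k \<le> B)"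
proof (induction k)
  case 0
  have arr: "\<forall>s L. (\<Sum>u<L. arrv mu r w lam (s+u) 0) \<le> lam * real L + 0" by simp
  have "\<exists>B. \<forall>t. qlen mu r w lam t 0 \<le> B"
    apply (rule hop_bound[where b="\<lambda>t. r!0 \<in> mu t" and W="w (r!0)" and a="\<lambda>t. arrv mu r w lam t 0"
          and l=lam and K=K and M=0])
    using 0 wpos l K per cap arr by (auto simp: serve_def less_imp_le)
  then show ?case using arr by blast
next
  case (Suc j)
  then obtain M B where MB: "\<forall>s L. (\<Sum>u<L. arrv mu r w lam (s+u) j) \<le> lam * real L + M"
    "\<forall>t. qlen mu r w lam t j \<le> B" by auto
  have arr: "\<forall>s L. (\<Sum>u<L. arrv mu r w lam (s+u) (Suc j)) \<le> lam * real L + (M + B)"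
  proof (intro allI)
    fix s L
    have "qlen mu r w lam (s+L) j \<ge> 0" using qlen_nonneg[OF l wpos] Suc.prems by simp
    then show "(\<Sum>u<L. arrv mu r w lam (s+u) (Suc j)) \<le> lam * real L + (M + B)"
      using qlen_conserve[where mu=mu and r=r and w=w and lam=lam and s=s and L=L and k=j] MB(1)[rule_format, of s L] MB(2)[rule_format, of s]
      by simp
  qed
  have "\<exists>B. \<forall>t. qlen mu r w lam t (Suc j) \<le> B"
    apply (rule hop_bound[where b="\<lambda>t. r!(Suc j) \<in> mu t" and W="w (r!Suc j)"
          and a="\<lambda>t. arrv mu r w lam t (Suc j)" and l=lam and K=K and M="M+B"])
    using Suc.prems wpos l K per cap arr by (auto simp: serve_def less_imp_le)
  then show ?case using arr by blast
qed

lemma uniform_bound: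
  fixes f :: "nat \<Rightarrow> nat \<Rightarrow> real"
  shows "\<forall>j<n. \<exists>B. \<forall>t. f j t \<le> B \<Longrightarrow> \<exists>B. \<forall>j<n. \<forall>t. f j t \<le> B"
proof (induction n)
  case 0 then show ?case by simp
next
  case (Suc n)
  then obtain B where B: "\<forall>j<n. \<forall>t. f j t \<le> B" by auto
  obtain C where C: "\<forall>t. f n t \<le> C" using Suc.prems by auto
  show ?case
    by (rule exI[of _ "max B C"]) (metis B C less_Suc_eq max.coboundedI1 max.coboundedI2)
qed

lemma flow_unstable:
  assumes l: "lam \<ge> 0" and wpos: "\<forall>e\<in>set r. w e > 0" and K: "K > 0"
    and per: "\<forall>t. mu (t + K) = mu t" and k: "k < length r"
    and bad: "w (r!k) * (\<Sum>u<K. if r!k \<in> mu u then 1 else 0) < real K * lam"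
    and st: "\<forall>j<length r. \<exists>B. \<forall>t. qlen mu r w lam t j \<le> B"
  shows False
proof -
  define n where "n = (\<Sum>u<K. if r!k \<in> mu u then 1 else (0::real))"
  define W where "W = w (r!k)"
  obtain B where B: "\<forall>j<length r. \<forall>t. qlen mu r w lam t j \<le> B"
    using uniform_bound[OF st] by blast
  have sumle: "(\<Sum>j<Suc k. qlen mu r w lam t j) \<le> real (Suc k) * B" for t
  proof -
    have "(\<Sum>j<Suc k. qlen mu r w lam t j) \<le> (\<Sum>j<Suc k. B)"
      by (rule sum_mono) (use B k in auto)
    then show ?thesis by simp
  qed
  define f where "f u = W * (if r!k \<in> mu u then 1 else 0)" for u
  have fper: "\<forall>t. f (t+K) = f t" using per by (simp add: f_def)
  have dle: "(\<Sum>u<m*K. serve mu r w (qlen mu r w lam u) u k) \<le> real m * (W * n)" for m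
  proof -
    have "(\<Sum>u<m*K. serve mu r w (qlen mu r w lam u) u k) \<le> (\<Sum>u<m*K. f (0+u))"
      by (rule sum_mono) (auto simp: serve_def f_def W_def)
    also have "\<dots> = real m * (\<Sum>u<K. f u)" by (rule per_mult[OF fper])
    also have "(\<Sum>u<K. f u) = W * n" by (simp add: f_def n_def sum_distrib_left)
    finally show ?thesis .
  qed
  have key: "real m * (real K * lam - W * n) \<le> real (Suc k) * B" for m
  proof -
    have "lam * real (m*K) - real m * (W * n) \<le> real (Suc k) * B"
      using qlen_sum[where mu=mu and r=r and w=w and lam=lam and t="m*K" and k=k]
        sumle[of "m*K"] dle[of m] by linarith
    then show ?thesis by (simp add: algebra_simps)
  qed
  have pos: "real K * lam - W * n > 0" using bad by (simp add: W_def n_def)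
  obtain m :: nat where m: "real m > real (Suc k) * B / (real K * lam - W * n)"
    using reals_Archimedean2 by blast
  then have "real m * (real K * lam - W * n) > real (Suc k) * B"
    using pos by (simp add: divide_less_eq)
  then show False using key[of m] by linarith
qed



theorem corollary1:
  fixes E :: "('v \<times> 'v) set"
    and c :: "('v \<times> 'v) \<Rightarrow> real"
    and conflict :: "('v \<times> 'v) \<Rightarrow> ('v \<times> 'v) \<Rightarrow> bool"
    and F :: "'f set"
    and route :: "'f \<Rightarrow> ('v \<times> 'v) list"
    and lam :: "'f \<Rightarrow> real"
    and w :: "'f \<Rightarrow> ('v \<times> 'v) \<Rightarrow> real"
    and mu :: "nat \<Rightarrow> ('v \<times> 'v) set"
    and K :: nat
  assumes "finite E"
    and "finite F"
    and "\<forall>i\<in>F. is_route E (route i)"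
    and "\<forall>i\<in>F. lam i > 0"
    and "\<forall>i\<in>F. \<forall>e\<in>set (route i). w i e > 0"
    and "\<forall>e\<in>E. (\<Sum>i\<in>{i\<in>F. e \<in> set (route i)}. w i e) \<le> c e"
    and "\<forall>t. mu t \<in> feasible_sets E conflict"
    and "K > 0"
    and "\<forall>t. mu (t + K) = mu t"
  shows "all_stable F route lam w mu \<longleftrightarrow>
         (\<forall>i\<in>F. \<forall>e\<in>set (route i). avg_rate mu K e \<ge> lam i / w i e)"
  proof -
  have rate: "(lam i / w i e \<le> avg_rate mu K e) \<longleftrightarrow>
      real K * lam i \<le> w i e * (\<Sum>u<K. if e \<in> mu u then 1 else 0)"
    if "i \<in> F" "e \<in> set (route i)" for i e
  proof -
    have W: "w i e > 0" using assms(5) that by auto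
    have Kp: "real K > 0" using assms(8) by simp
    show ?thesis unfolding avg_rate_def using W Kp
      by (simp add: divide_le_eq le_divide_eq mult.commute mult.left_commute)
  qed
  show ?thesis
  proof
    assume st: "all_stable F route lam w mu"
    show "\<forall>i\<in>F. \<forall>e\<in>set (route i). avg_rate mu K e \<ge> lam i / w i e"
    proof (intro ballI, rule ccontr)
      fix i e assume i: "i \<in> F" and e: "e \<in> set (route i)" and nb: "\<not> avg_rate mu K e \<ge> lam i / w i e"
      obtain k where k: "k < length (route i)" "route i ! k = e" using e by (auto simp: in_set_conv_nth)
      show False
        apply (rule flow_unstable[where lam="lam i" and r="route i" and w="w i" and K=K and mu=mu and k=k])
        using assms(4,5,8,9) i k nb rate[OF i e] st unfolding all_stable_def
        by (auto simp: less_imp_le)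
    qed
  next
    assume c: "\<forall>i\<in>F. \<forall>e\<in>set (route i). avg_rate mu K e \<ge> lam i / w i e"
    show "all_stable F route lam w mu" unfolding all_stable_def
    proof (intro ballI allI impI)
      fix i k assume i: "i \<in> F" and k: "k < length (route i)"
      have cap: "\<forall>k<length (route i). real K * lam i \<le> w i (route i ! k) * (\<Sum>u<K. if route i ! k \<in> mu u then 1 else 0)"
        using c rate i by (metis nth_mem)
      show "\<exists>B. \<forall>t. qlen mu (route i) (w i) (lam i) t k \<le> B"
        using flow_stable[where lam="lam i" and r="route i" and w="w i" and K=K and mu=mu, OF _ _ _ _ cap k]
          assms(4,5,8,9) i by (auto simp: less_imp_le)
    qed
  qed
qed

end
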